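(* Let $\overline{A}^f,\overline{A}^d\in\mathbb{R}^{nd\times nd}$ with $\overline{A}^{f,\top}=\overline{A}^f\succ0$ and $\overline{A}^{d,\top}=\overline{A}^d$, and $b\in\mathbb{R}^{nd}$. Assume $(\overline{A}^f+\overline{A}^d)u+b=0$ has a unique solution $u_*$. Consider the iteration $$u_{\ell+1}=u_\ell-\delta\eta\,(\overline{A}^f u_\ell+\overline{A}^d u_{\ell-1}+b),\qquad \ell\ge1,$$ with $u_0=u_1=0$. If $\lambda_{\min}(\overline{A}^f)>\max\{\lambda_{\max}(\overline{A}^d),|\lambda_{\min}(\overline{A}^d)|\}$, then there is a sufficiently small $\delta\eta>0$ such that $u_\ell\to u_*$ as $\ell\to\infty$.
   Context: $\lambda_{\min}$ and $\lambda_{\max}$ denote the smallest and largest eigenvalues of a symmetric matrix. *)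

theory Defs
  imports "HOL-Analysis.Analysis"
begin

definition mat_eigenvalue :: "real^'n^'n \<Rightarrow> real \<Rightarrow> bool" where
  "mat_eigenvalue A l \<longleftrightarrow> (\<exists>v. v \<noteq> 0 \<and> A *v v = l *\<^sub>R v)"

text \<open>Smallest / largest eigenvalue (meaningful for symmetric matrices, whose
  eigenvalues are real, finitely many and nonempty).\<close>
definition lambda_min :: "real^'n^'n \<Rightarrow> real" where
  "lambda_min A = Min {l. mat_eigenvalue A l}"

definition lambda_max :: "real^'n^'n \<Rightarrow> real" where
  "lambda_max A = Max {l. mat_eigenvalue A l}"

definition pos_def_mat :: "real^'n^'n \<Rightarrow> bool" where
  "pos_def_mat A \<longleftrightarrow> (\<forall>x. x \<noteq> 0 \<longrightarrow> x \<bullet> (A *v x) > 0)"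

end

theory Submission
  imports Defs
begin

lemma polar:
  fixes F :: "'a::euclidean_space \<Rightarrow> 'a"
  assumes lin: "linear F" and sym: "\<And>x y. y \<bullet> F x = x \<bullet> F y"
    and bd: "\<And>x. \<bar>x \<bullet> F x\<bar> \<le> d * (norm x)^2"
  shows "norm (F x) \<le> d * norm x"
proof (cases "x = 0 \<or> F x = 0")
  case True
  then show ?thesis
  proof
    assume "x = 0" then show ?thesis using linear_0[OF lin] by simp
  next
    assume h: "F x = 0"
    have "d \<ge> 0"
    proof -
      obtain e :: 'a where "norm e = 1" using norm_Basis SOME_Basis by blast
      then have "\<bar>e \<bullet> F e\<bar> \<le> d" using bd[of e] by simp
      then show ?thesis by linarith
    qed
    then show ?thesis using h by simp
  qed
next
  case False
  then have x0: "x \<noteq> 0" and y0: "F x \<noteq> 0" by auto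
  have unit: "q \<bullet> F p \<le> d" if "norm p = 1" "norm q = 1" for p q
  proof -
    have e: "4 * (q \<bullet> F p) = (p+q) \<bullet> F (p+q) - (p-q) \<bullet> F (p-q)"
      using sym[of p q] by (simp add: linear_add[OF lin] linear_diff[OF lin] inner_add_left inner_add_right inner_diff_left inner_diff_right)
    have "(p+q) \<bullet> F (p+q) \<le> d * (norm (p+q))^2" using bd[of "p+q"] by linarith
    moreover have "- ((p-q) \<bullet> F (p-q)) \<le> d * (norm (p-q))^2" using bd[of "p-q"] by linarith
    moreover have "(norm (p+q))^2 + (norm (p-q))^2 = 4"
    proof -
      have "p \<bullet> p = 1" "q \<bullet> q = 1" using that by (metis power2_norm_eq_inner power_one)+
      then show ?thesis by (simp add: power2_norm_eq_inner inner_add_left inner_add_right inner_diff_left inner_diff_right inner_commute)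
    qed
    ultimately have "4 * (q \<bullet> F p) \<le> d * (norm (p+q))^2 + d * (norm (p-q))^2"
      using e by linarith
    also have "\<dots> = d * 4" using \<open>(norm (p+q))^2 + (norm (p-q))^2 = 4\<close> by (metis distrib_left)
    finally show ?thesis by linarith
  qed
  define p where "p = x /\<^sub>R norm x"
  define q where "q = F x /\<^sub>R norm (F x)"
  have "q \<bullet> F p = (F x \<bullet> F x) / (norm (F x) * norm x)"
    unfolding p_def q_def using x0 y0 by (simp add: linear_scale[OF lin] field_simps)
  also have "\<dots> = norm (F x) / norm x" using x0 y0
    by (simp add: power2_norm_eq_inner[symmetric] power2_eq_square)
  finally have "norm (F x) / norm x \<le> d" using unit[of p q] x0 y0 unfolding p_def q_def by simp
  then show ?thesis using x0 by (simp add: divide_le_eq mult.commute)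
qed

lemma rayleigh_min:
  fixes F :: "'a::euclidean_space \<Rightarrow> 'a"
  assumes lin: "linear F" and sym: "\<And>x y. y \<bullet> F x = x \<bullet> F y"
  shows "\<exists>v m. v \<noteq> 0 \<and> F v = m *\<^sub>R v \<and> (\<forall>y. m * (norm y)^2 \<le> y \<bullet> F y)"
proof -
  have cF: "continuous_on UNIV F" using lin by (simp add: linear_continuous_on linear_conv_bounded_linear)
  have cf: "continuous_on (sphere 0 1) (\<lambda>x. x \<bullet> F x)"
    by (rule continuous_on_inner[OF continuous_on_id continuous_on_subset[OF cF]]) auto
  obtain e :: 'a where "norm e = 1" using norm_Basis SOME_Basis by blast
  then have ne: "sphere (0::'a) 1 \<noteq> {}" by auto
  obtain x0 where x0: "x0 \<in> sphere 0 1" and mn: "\<And>y. y \<in> sphere 0 1 \<Longrightarrow> x0 \<bullet> F x0 \<le> y \<bullet> F y"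
    using continuous_attains_inf[OF compact_sphere ne cf] by blast
  define m where "m = x0 \<bullet> F x0"
  have nx0: "norm x0 = 1" using x0 by simp
  have quad: "m * (norm y)^2 \<le> y \<bullet> F y" for y
  proof (cases "y = 0")
    case True then show ?thesis using linear_0[OF lin] by simp
  next
    case False
    define z where "z = y /\<^sub>R norm y"
    have "z \<in> sphere 0 1" using False unfolding z_def by simp
    then have "m \<le> z \<bullet> F z" using mn unfolding m_def by blast
    also have "z \<bullet> F z = (y \<bullet> F y) / (norm y)^2"
      unfolding z_def using False by (simp add: linear_scale[OF lin] power2_eq_square field_simps)
    finally show ?thesis using False by (simp add: le_divide_eq)
  qed
  define w where "w = F x0 - m *\<^sub>R x0"
  define W where "W = w \<bullet> w"
  define K where "K = w \<bullet> F w - m * W"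
  have key: "0 \<le> 2 * t * W + t^2 * K" for t
  proof -
    have a: "(x0 + t *\<^sub>R w) \<bullet> F (x0 + t *\<^sub>R w) = m + 2 * t * (w \<bullet> F x0) + t^2 * (w \<bullet> F w)"
      using sym[of x0 w] unfolding m_def
      by (simp add: linear_add[OF lin] linear_scale[OF lin] inner_add_left inner_add_right power2_eq_square algebra_simps)
    have xx: "x0 \<bullet> x0 = 1" using nx0 by (metis power2_norm_eq_inner power_one)
    have "(norm (x0 + t *\<^sub>R w))^2 = (x0 + t *\<^sub>R w) \<bullet> (x0 + t *\<^sub>R w)" by (rule power2_norm_eq_inner)
    also have "\<dots> = 1 + 2 * t * (x0 \<bullet> w) + t^2 * W"
      using xx unfolding W_def
      by (simp add: inner_add_left inner_add_right inner_commute power2_eq_square algebra_simps)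
    finally have b: "(norm (x0 + t *\<^sub>R w))^2 = 1 + 2 * t * (x0 \<bullet> w) + t^2 * W" .
    have c: "w \<bullet> F x0 - m * (x0 \<bullet> w) = W"
      unfolding W_def w_def by (simp add: inner_diff_left inner_diff_right inner_commute algebra_simps)
    have "m * (norm (x0 + t *\<^sub>R w))^2 \<le> (x0 + t *\<^sub>R w) \<bullet> F (x0 + t *\<^sub>R w)" by (rule quad)
    then have "0 \<le> 2 * t * (w \<bullet> F x0 - m * (x0 \<bullet> w)) + t^2 * (w \<bullet> F w - m * W)"
      unfolding a b by (simp add: algebra_simps)
    then show ?thesis using c unfolding K_def by simp
  qed
  have "W = 0"
  proof (rule ccontr)
    assume "W \<noteq> 0"
    then have Wp: "W > 0" unfolding W_def by simp
    define s where "s = W / (\<bar>K\<bar> + 1)"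
    have sp: "s > 0" using Wp unfolding s_def by simp
    have "s * \<bar>K\<bar> < W" unfolding s_def using Wp
      by (simp add: field_simps)
    have "s * K \<le> s * \<bar>K\<bar>" using sp by (intro mult_left_mono) simp_all
    then have "s * (s * K) \<le> s * (s * \<bar>K\<bar>)" using sp by (intro mult_left_mono) simp_all
    also have "\<dots> < s * W" using sp \<open>s * \<bar>K\<bar> < W\<close> by simp
    finally have "s * (s * K) < s * W" .
    moreover have "0 \<le> 2 * (-s) * W + (-s)^2 * K" by (rule key)
    ultimately show False using sp Wp by (simp add: power2_eq_square)
  qed
  then have "w = 0" unfolding W_def by simp
  then have "F x0 = m *\<^sub>R x0" unfolding w_def by simp
  moreover have "x0 \<noteq> 0" using nx0 by auto
  ultimately show ?thesis using quad by blast
qed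

lemma mat_sym: "transpose A = A \<Longrightarrow> y \<bullet> (A *v x) = x \<bullet> (A *v (y::real^'n))"
  by (metis dot_lmul_matrix inner_commute vector_transpose_matrix)

lemma eig_finite:
  fixes A :: "real^'n^'n"
  assumes sy: "transpose A = A"
  shows "finite {l. mat_eigenvalue A l}"
proof -
  define S where "S = {l. mat_eigenvalue A l}"
  define v where "v l = (SOME v. v \<noteq> 0 \<and> A *v v = l *\<^sub>R v)" for l
  have vp: "v l \<noteq> 0 \<and> A *v v l = l *\<^sub>R v l" if "l \<in> S" for l
  proof -
    have "\<exists>v. v \<noteq> 0 \<and> A *v v = l *\<^sub>R v" using that unfolding S_def mat_eigenvalue_def by simp
    then show ?thesis unfolding v_def by (rule someI_ex)
  qed
  have inj: "inj_on v S"
  proof (rule inj_onI)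
    fix l l' assume "l \<in> S" "l' \<in> S" "v l = v l'"
    then have "l *\<^sub>R v l = l' *\<^sub>R v l" using vp by metis
    then show "l = l'" using vp \<open>l \<in> S\<close> by simp
  qed
  have po: "pairwise orthogonal (v ` S)"
    unfolding pairwise_def orthogonal_def
  proof clarify
    fix l l' assume l: "l \<in> S" and l': "l' \<in> S" and ne: "v l \<noteq> v l'"
    then have "l \<noteq> l'" by auto
    have "l * (v l' \<bullet> v l) = v l' \<bullet> (A *v v l)" using vp[OF l] by simp
    also have "\<dots> = v l \<bullet> (A *v v l')" by (rule mat_sym[OF sy])
    also have "\<dots> = l' * (v l' \<bullet> v l)" using vp[OF l'] by (simp add: inner_commute)
    finally show "v l \<bullet> v l' = 0" using \<open>l \<noteq> l'\<close> by (simp add: inner_commute)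
  qed
  have "0 \<notin> v ` S" using vp by auto
  then have "independent (v ` S)" using pairwise_orthogonal_independent po by blast
  then have "finite (v ` S)" using independent_bound by blast
  then show ?thesis using finite_imageD inj unfolding S_def by blast
qed

lemma lmin_bound:
  fixes A :: "real^'n^'n"
  assumes sy: "transpose A = A"
  shows "lambda_min A * (norm y)^2 \<le> y \<bullet> (A *v y)"
proof -
  obtain v m where v: "v \<noteq> 0" "A *v v = m *\<^sub>R v" and q: "\<forall>y. m * (norm y)^2 \<le> y \<bullet> (A *v y)"
    using rayleigh_min[of "(*v) A"] mat_sym[OF sy] by auto
  have "m \<in> {l. mat_eigenvalue A l}" using v unfolding mat_eigenvalue_def by auto
  then have "lambda_min A \<le> m" unfolding lambda_min_def using eig_finite[OF sy] by simp
  then have "lambda_min A * (norm y)^2 \<le> m * (norm y)^2" by (simp add: mult_right_mono)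
  then show ?thesis using q by (meson order_trans)
qed

lemma lmax_bound:
  fixes A :: "real^'n^'n"
  assumes sy: "transpose A = A"
  shows "y \<bullet> (A *v y) \<le> lambda_max A * (norm y)^2"
proof -
  have lin: "linear (\<lambda>x. - (A *v x))" by (rule linearI) (simp_all add: algebra_simps)
  obtain v m where v: "v \<noteq> 0" "- (A *v v) = m *\<^sub>R v" and q: "\<forall>y. m * (norm y)^2 \<le> y \<bullet> - (A *v y)"
    using rayleigh_min[OF lin] mat_sym[OF sy] by auto
  have "A *v v = (-m) *\<^sub>R v" using v(2) by (metis minus_minus scaleR_minus_left)
  then have "-m \<in> {l. mat_eigenvalue A l}" using v unfolding mat_eigenvalue_def by auto
  then have "-m \<le> lambda_max A" unfolding lambda_max_def using eig_finite[OF sy] by simp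
  then have "(-m) * (norm y)^2 \<le> lambda_max A * (norm y)^2" by (rule mult_right_mono) simp
  then show ?thesis using q[rule_format, of y] by simp
qed

theorem theorem5:
  fixes Af Ad :: "real^'n^'n" and b :: "real^'n"
  assumes symf: "transpose Af = Af" and pdf: "pos_def_mat Af"
    and symd: "transpose Ad = Ad"
    and uniq: "\<exists>!u. (Af + Ad) *v u + b = 0"
    and eig: "lambda_min Af > max (lambda_max Ad) \<bar>lambda_min Ad\<bar>"
  shows "\<exists>h0>0. \<forall>h. 0 < h \<and> h < h0 \<longrightarrow>
           (\<forall>(u :: nat \<Rightarrow> real^'n) ustar.
              (Af + Ad) *v ustar + b = 0 \<longrightarrow>
              u 0 = 0 \<longrightarrow> u 1 = 0 \<longrightarrow>
              (\<forall>l\<ge>1. u (l + 1) = u l - h *\<^sub>R (Af *v u l + Ad *v u (l - 1) + b)) \<longrightarrow>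
              u \<longlonglongrightarrow> ustar)"
proof -
  define a where "a = lambda_min Af"
  define D where "D = max (lambda_max Ad) \<bar>lambda_min Ad\<bar>"
  have aD: "D < a" using eig unfolding a_def D_def by simp
  have D0: "0 \<le> D" unfolding D_def by simp
  have hA: "a * (norm x)^2 \<le> x \<bullet> (Af *v x)" for x unfolding a_def by (rule lmin_bound[OF symf])
  have hD: "norm (Ad *v x) \<le> D * norm x" for x
  proof (rule polar[of "(*v) Ad"])
    show "linear ((*v) Ad)" by simp
    show "y \<bullet> (Ad *v x) = x \<bullet> (Ad *v y)" for x y by (rule mat_sym[OF symd])
    show "\<bar>x \<bullet> (Ad *v x)\<bar> \<le> D * (norm x)^2" for x
    proof -
      have 1: "lambda_min Ad * (norm x)^2 \<le> x \<bullet> (Ad *v x)" by (rule lmin_bound[OF symd])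
      have 2: "x \<bullet> (Ad *v x) \<le> lambda_max Ad * (norm x)^2" by (rule lmax_bound[OF symd])
      have 3: "lambda_max Ad * (norm x)^2 \<le> D * (norm x)^2" unfolding D_def by (rule mult_right_mono) simp_all
      have 4: "(- D) * (norm x)^2 \<le> lambda_min Ad * (norm x)^2" unfolding D_def by (rule mult_right_mono) simp_all
      show ?thesis using 1 2 3 4 by simp
    qed
  qed
  obtain B where Bp: "B > 0" and hB: "\<And>x. norm (Af *v x) \<le> norm x * B"
    using bounded_linear.pos_bounded[OF matrix_vector_mul_bounded_linear[of Af]] by blast
  have quadB: "x \<bullet> (Af *v x) \<le> B * (norm x)^2" for x
  proof -
    have "x \<bullet> (Af *v x) \<le> norm x * norm (Af *v x)" by (rule norm_cauchy_schwarz)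
    also have "\<dots> \<le> norm x * (norm x * B)" by (rule mult_left_mono[OF hB]) simp
    finally show ?thesis by (simp add: power2_eq_square mult.commute mult.left_commute)
  qed
  have aB: "a \<le> B"
  proof -
    obtain e :: "real^'n" where e: "norm e = 1" using norm_Basis SOME_Basis by blast
    show ?thesis using hA[of e] quadB[of e] e by simp
  qed
  show ?thesis
  proof (intro exI[of _ "1/B"] conjI allI impI)
    show "0 < 1/B" using Bp by simp
    fix h :: real and u :: "nat \<Rightarrow> real^'n" and ustar
    assume h: "0 < h \<and> h < 1/B" and eq: "(Af + Ad) *v ustar + b = 0"
      and u0: "u 0 = 0" and u1: "u 1 = 0"
      and rec: "\<forall>l\<ge>1. u (l + 1) = u l - h *\<^sub>R (Af *v u l + Ad *v u (l - 1) + b)"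
    have h0: "0 < h" using h by simp
    have hB1: "h * B < 1" using h Bp by (simp add: less_divide_eq)
    have "h * a \<le> h * B" using aB h0 by simp
    then have ha1: "h * a \<le> 1" using hB1 by linarith
    have "h * D \<le> h * a" using aD h0 by simp
    then have hD1: "h * D \<le> 1" using ha1 by linarith
    define G where "G x = x - h *\<^sub>R (Af *v x)" for x
    have linG: "linear G" unfolding G_def by (rule linearI) (simp_all add: algebra_simps)
    have hG: "norm (G x) \<le> (1 - h * a) * norm x" for x
    proof (rule polar[OF linG])
      show "y \<bullet> G x = x \<bullet> G y" for x y
        unfolding G_def using mat_sym[OF symf, of y x] by (simp add: inner_diff_right inner_commute)
      show "\<bar>x \<bullet> G x\<bar> \<le> (1 - h * a) * (norm x)^2" for x
      proof -
        have e: "x \<bullet> G x = (norm x)^2 - h * (x \<bullet> (Af *v x))"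
          unfolding G_def by (simp add: inner_diff_right power2_norm_eq_inner)
        have 1: "h * (a * (norm x)^2) \<le> h * (x \<bullet> (Af *v x))" using hA h0 by (simp add: mult_left_mono)
        have 2: "h * (x \<bullet> (Af *v x)) \<le> h * (B * (norm x)^2)" using quadB h0 by (simp add: mult_left_mono)
        have 3: "h * (B * (norm x)^2) \<le> (norm x)^2" using hB1
        proof -
          have "(h * B) * (norm x)^2 \<le> 1 * (norm x)^2" using hB1 by (intro mult_right_mono) simp_all
          then show ?thesis by (simp add: mult.assoc)
        qed
        show ?thesis using e 1 2 3 by (simp add: algebra_simps)
      qed
    qed
    have b: "b = - (Af *v ustar) - Ad *v ustar" using eq by (simp add: algebra_simps eq_neg_iff_add_eq_0)
    define x where "x l = norm (u l - ustar)" for l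
    have xs: "x (Suc (Suc l)) \<le> (1 - h * a) * x (Suc l) + h * D * x l" for l
    proof -
      have "u (Suc l + 1) = u (Suc l) - h *\<^sub>R (Af *v u (Suc l) + Ad *v u (Suc l - 1) + b)"
        using rec by simp
      then have "u (Suc (Suc l)) - ustar = G (u (Suc l) - ustar) - h *\<^sub>R (Ad *v (u l - ustar))"
        unfolding G_def b by (simp add: algebra_simps)
      then have "x (Suc (Suc l)) \<le> norm (G (u (Suc l) - ustar)) + norm (h *\<^sub>R (Ad *v (u l - ustar)))"
        unfolding x_def by (metis norm_triangle_ineq4)
      also have "\<dots> \<le> (1 - h * a) * x (Suc l) + h * (D * x l)"
        unfolding x_def using hG hD h0 by (intro add_mono) (simp_all add: mult_left_mono)
      finally show ?thesis by simp
    qed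
    define r where "r = 1 - h * (a - D) / 2"
    define be where "be = h * (a + D) / 2"
    define V where "V l = x (Suc l) + be * x l" for l
    have x0: "x l \<ge> 0" for l unfolding x_def by simp
    have "h * D \<ge> 0" using D0 h0 by simp
    then have r0: "0 \<le> r" unfolding r_def using ha1 by (simp add: algebra_simps)
    have r1: "r < 1" unfolding r_def using aD h0 by simp
    have be0: "0 \<le> be" unfolding be_def using h0 aD D0 by simp
    have rbe: "h * D \<le> r * be"
    proof -
      have "r * be - h * D = h * (a - D) / 2 * (1 - h * (a + D) / 2)"
        unfolding r_def be_def by (simp add: algebra_simps)
      moreover have "0 \<le> h * (a - D) / 2 * (1 - h * (a + D) / 2)"
        using h0 aD ha1 hD1 by (intro mult_nonneg_nonneg) (simp_all add: algebra_simps)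
      ultimately show ?thesis by simp
    qed
    have Vs: "V (Suc l) \<le> r * V l" for l
    proof -
      have "V (Suc l) \<le> (1 - h * a) * x (Suc l) + h * D * x l + be * x (Suc l)"
        unfolding V_def using xs[of l] by simp
      also have "\<dots> \<le> r * x (Suc l) + (r * be) * x l"
      proof -
        have eq: "1 - h * a + be = r" unfolding r_def be_def by (simp add: field_simps)
        have m: "h * D * x l \<le> r * be * x l" by (rule mult_right_mono[OF rbe x0])
        have "(1 - h * a) * x (Suc l) + be * x (Suc l) = r * x (Suc l)"
          using eq by (metis distrib_right)
        then show ?thesis using m by linarith
      qed
      finally show ?thesis unfolding V_def by (simp add: algebra_simps)
    qed
    have Vb: "V l \<le> r ^ l * V 0" for l
    proof (induction l)
      case 0 then show ?case by simp
    next
      case (Suc l)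
      have "V (Suc l) \<le> r * V l" by (rule Vs)
      also have "\<dots> \<le> r * (r ^ l * V 0)" using Suc r0 by (rule mult_left_mono)
      finally show ?case by (simp add: mult.assoc)
    qed
    have lim0: "(\<lambda>l. r ^ l * V 0) \<longlonglongrightarrow> 0"
      using r0 r1 by (intro tendsto_mult_left_zero LIMSEQ_power_zero) simp
    have "(\<lambda>l. u (Suc l) - ustar) \<longlonglongrightarrow> 0"
    proof (rule Lim_null_comparison[OF _ lim0])
      show "\<forall>\<^sub>F l in sequentially. norm (u (Suc l) - ustar) \<le> r ^ l * V 0"
      proof (intro always_eventually allI)
        fix l
        have "norm (u (Suc l) - ustar) \<le> V l" unfolding V_def x_def using be0 by simp
        then show "norm (u (Suc l) - ustar) \<le> r ^ l * V 0" using Vb[of l] by linarith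
      qed
    qed
    then have "(\<lambda>l. u l - ustar) \<longlonglongrightarrow> 0" by (rule LIMSEQ_imp_Suc)
    then show "u \<longlonglongrightarrow> ustar" by (simp add: LIM_zero_iff)
  qed
qed

end
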